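(* Assume in addition that $G$ is commutative. Then there exists $C>0$ such that $C\,\|\nabla\phi(x)\|^{4/3}\ge\phi(x)$ for all $x\in\mathbb{R}^N$.
   Context: Let $G$ be a closed subgroup of $GL(N,\mathbb{R})$ invariant under transpose $g\mapsto g^{*}$, and $\mathfrak p=\{X\in\mathrm{Lie}(G):X^{*}=X\}$. Equip $M_N(\mathbb{R})$ with the inner product $\mathrm{tr}(XY^{*})$, let $X_1,\dots,X_n$ be an orthonormal basis of $\mathfrak p$, and set $\phi(x)=\sum_{i=1}^n\langle X_ix,x\rangle^2$ for $x\in\mathbb{R}^N$ (standard inner product), so that $\nabla\phi(x)=4\sum_i\langle X_ix,x\rangle X_ix$ ($\nabla$ the Euclidean gradient). *)

theory Defs
  imports "HOL-Analysis.Analysis"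
begin

type_synonym 'n mat = "real ^ 'n ^ 'n"

text \<open>Matrix powers and the matrix exponential (the generic exp on vec types
is componentwise, so it is not the matrix exponential).\<close>
primrec mat_pow :: "'n::finite mat \<Rightarrow> nat \<Rightarrow> 'n mat" where
  "mat_pow A 0 = mat 1"
| "mat_pow A (Suc k) = A ** mat_pow A k"

definition mat_exp :: "'n::finite mat \<Rightarrow> 'n mat" where
  "mat_exp A = (\<Sum>k. (1 / fact k) *\<^sub>R mat_pow A k)"

definition GL :: "'n::finite mat set" where
  "GL = {A. invertible A}"

definition closed_subgroup_GL :: "'n::finite mat set \<Rightarrow> bool" where
  "closed_subgroup_GL G \<longleftrightarrow> G \<subseteq> GL \<and> mat 1 \<in> G
     \<and> (\<forall>A\<in>G. \<forall>B\<in>G. A ** B \<in> G) \<and> (\<forall>A\<in>G. matrix_inv A \<in> G)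
     \<and> closedin (top_of_set GL) G"

definition lie_alg :: "'n::finite mat set \<Rightarrow> 'n mat set" where
  "lie_alg G = {X. \<forall>t::real. mat_exp (t *\<^sub>R X) \<in> G}"

definition sym_part :: "'n::finite mat set \<Rightarrow> 'n mat set" where
  "sym_part G = {X \<in> lie_alg G. transpose X = X}"

text \<open>Orthonormal basis w.r.t. tr(XY^*), which is the inner product on real^'n^'n.\<close>
definition orthonormal_basis :: "'n::finite mat set \<Rightarrow> 'n mat set \<Rightarrow> bool" where
  "orthonormal_basis B V \<longleftrightarrow> B \<subseteq> V \<and> span B = V \<and> pairwise orthogonal B
     \<and> (\<forall>X\<in>B. norm X = 1)"

definition phi :: "'n::finite mat set \<Rightarrow> real ^ 'n \<Rightarrow> real" where
  "phi B x = (\<Sum>X\<in>B. ((X *v x) \<bullet> x) ^ 2)"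

text \<open>Euclidean gradient of phi (explicit formula given in the paper).\<close>
definition grad_phi :: "'n::finite mat set \<Rightarrow> real ^ 'n \<Rightarrow> real ^ 'n" where
  "grad_phi B x = 4 *\<^sub>R (\<Sum>X\<in>B. ((X *v x) \<bullet> x) *\<^sub>R (X *v x))"

end

theory Submission
  imports Defs
begin


lemma norm_sq_mat: "(norm (M::real^'n^'m))^2 = (\<Sum>i\<in>UNIV. \<Sum>j\<in>UNIV. (M$i$j)^2)"
  unfolding power2_norm_eq_inner inner_vec_def inner_real_def by (simp add: power2_eq_square)

lemma norm_mmult_le: "norm ((A::real^'n^'m) ** (B::real^'p^'n)) \<le> norm A * norm B"
proof -
  have e: "(A ** B)$i$j = (A$i) \<bullet> (column j B)" for i j
    by (simp add: matrix_matrix_mult_def inner_vec_def column_def)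
  have cs: "((A ** B)$i$j)^2 \<le> ((A$i) \<bullet> (A$i)) * ((column j B) \<bullet> (column j B))" for i j
    unfolding e by (rule Cauchy_Schwarz_ineq)
  have "(norm (A ** B))^2 \<le> (\<Sum>i\<in>UNIV. \<Sum>j\<in>UNIV. ((A$i) \<bullet> (A$i)) * ((column j B) \<bullet> (column j B)))"
    unfolding norm_sq_mat by (intro sum_mono cs)
  also have "\<dots> = (\<Sum>i\<in>UNIV. (A$i) \<bullet> (A$i)) * (\<Sum>j\<in>UNIV. (column j B) \<bullet> (column j B))"
    by (simp add: sum_product)
  also have "(\<Sum>i\<in>UNIV. (A$i) \<bullet> (A$i)) = (norm A)^2"
    by (simp add: power2_norm_eq_inner inner_vec_def)
  also have "(\<Sum>j\<in>UNIV. (column j B) \<bullet> (column j B)) = (norm B)^2"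
  proof -
    have "(\<Sum>j\<in>UNIV. (column j B) \<bullet> (column j B)) = (\<Sum>j\<in>UNIV. \<Sum>k\<in>UNIV. (B$k$j)^2)"
      by (simp add: column_def inner_vec_def power2_eq_square)
    also have "\<dots> = (\<Sum>k\<in>UNIV. \<Sum>j\<in>UNIV. (B$k$j)^2)"
      by (rule sum.swap)
    finally show ?thesis unfolding norm_sq_mat .
  qed
  finally have "(norm (A ** B))^2 \<le> (norm A * norm B)^2" by (simp add: power_mult_distrib)
  then show ?thesis by (rule power2_le_imp_le) simp
qed

lemma mat_pow_scale: "mat_pow (t *\<^sub>R X) k = t^k *\<^sub>R mat_pow X k"
  by (induction k) (simp_all add: matrix_scalar_ac scalar_matrix_assoc[symmetric])

lemma mat_pow_norm: fixes X :: "'n::finite mat" shows "norm (mat_pow X k) \<le> norm (mat 1 :: 'n::finite mat) * norm X ^ k"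
proof (induction k)
  case 0 then show ?case by simp
next
  case (Suc k)
  have "norm (mat_pow X (Suc k)) \<le> norm X * norm (mat_pow X k)"
    by (simp add: norm_mmult_le)
  also have "\<dots> \<le> norm X * (norm (mat 1 :: 'n::finite mat) * norm X ^ k)"
    by (intro mult_left_mono Suc) simp
  finally show ?case by (simp add: algebra_simps)
qed

lemma mat_exp_scale: "mat_exp (t *\<^sub>R X) = (\<Sum>k. (t^k / fact k) *\<^sub>R mat_pow X k)"
  unfolding mat_exp_def mat_pow_scale by simp

lemma mat_exp_summable: "summable (\<lambda>k. (t^k / fact k) *\<^sub>R mat_pow (X::'n::finite mat) k)"
proof (rule summable_comparison_test')
  show "summable (\<lambda>k. norm (mat 1 :: 'n mat) * (inverse (fact k) * (\<bar>t\<bar> * norm X)^k))"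
    by (intro summable_mult summable_exp)
  show "norm ((t^k / fact k) *\<^sub>R mat_pow X k) \<le> norm (mat 1 :: 'n mat) * (inverse (fact k) * (\<bar>t\<bar> * norm X)^k)" for k
  proof -
    have "norm ((t^k / fact k) *\<^sub>R mat_pow X k) = (\<bar>t\<bar>^k / fact k) * norm (mat_pow X k)"
      by (simp add: power_abs)
    also have "\<dots> \<le> (\<bar>t\<bar>^k / fact k) * (norm (mat 1 :: 'n mat) * norm X ^ k)"
      by (intro mult_left_mono mat_pow_norm) simp
    finally show ?thesis by (simp add: power_mult_distrib divide_inverse algebra_simps)
  qed
qed

lemma mat_exp_deriv0:
  fixes X :: "'n::finite mat"
  shows "((\<lambda>t. (1/t) *\<^sub>R (mat_exp (t *\<^sub>R X) - mat 1)) \<longlongrightarrow> X) (at 0)"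
proof -
  define c0 where "c0 = norm (mat 1 :: 'n mat)"
  define g where "g n = c0 * (inverse (fact (n+2)) * norm X ^ (n+2))" for n
  have sg: "summable g"
    unfolding g_def by (intro summable_mult summable_ignore_initial_segment[where k=2] summable_exp)
  define K where "K = suminf g"
  have bound: "norm ((1/t) *\<^sub>R (mat_exp (t *\<^sub>R X) - mat 1) - X) \<le> \<bar>t\<bar> * K"
    if t: "\<bar>t\<bar> \<le> 1" "t \<noteq> 0" for t
  proof -
    define f where "f k = (t^k / fact k) *\<^sub>R mat_pow X k" for k
    have sf: "summable f" unfolding f_def by (rule mat_exp_summable)
    have "mat_exp (t *\<^sub>R X) = (\<Sum>n. f (n+2)) + (\<Sum>i<2. f i)"
      unfolding mat_exp_scale f_def[symmetric] by (rule suminf_split_initial_segment[OF sf])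
    also have "(\<Sum>i<2. f i) = mat 1 + t *\<^sub>R X"
      by (simp add: f_def numeral_2_eq_2)
    finally have e: "(1/t) *\<^sub>R (mat_exp (t *\<^sub>R X) - mat 1) - X = (1/t) *\<^sub>R (\<Sum>n. f (n+2))"
      using t by (simp add: algebra_simps)
    have nb: "norm (f (n+2)) \<le> t^2 * g n" for n
    proof -
      have "norm (f (n+2)) = (\<bar>t\<bar>^(n+2) / fact (n+2)) * norm (mat_pow X (n+2))"
        by (simp add: f_def power_abs abs_mult)
      also have "\<dots> \<le> (\<bar>t\<bar>^(n+2) / fact (n+2)) * (c0 * norm X ^ (n+2))"
        unfolding c0_def by (intro mult_left_mono mat_pow_norm) simp
      also have "\<bar>t\<bar>^(n+2) \<le> t^2"
      proof -
        have "\<bar>t\<bar>^(n+2) = \<bar>t\<bar>^n * t^2" by (simp add: power_add power2_eq_square)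
        also have "\<dots> \<le> 1 * t^2" by (intro mult_right_mono power_le_one) (use t in auto)
        finally show ?thesis by simp
      qed
      then have "(\<bar>t\<bar>^(n+2) / fact (n+2)) * (c0 * norm X ^ (n+2)) \<le> (t^2 / fact (n+2)) * (c0 * norm X ^ (n+2))"
        by (intro mult_right_mono divide_right_mono) (auto simp: c0_def)
      finally show ?thesis by (simp add: g_def divide_inverse algebra_simps)
    qed
    have "norm (\<Sum>n. f (n+2)) \<le> (\<Sum>n. t^2 * g n)"
      by (rule norm_suminf_le[OF nb]) (intro summable_mult sg)
    also have "\<dots> = t^2 * K" unfolding K_def using suminf_mult[OF sg, of "t^2"] by simp
    finally have "norm (\<Sum>n. f (n+2)) \<le> t^2 * K" .
    then have "norm ((1/t) *\<^sub>R (\<Sum>n. f (n+2))) \<le> (1/\<bar>t\<bar>) * (t^2 * K)"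
      by (simp add: divide_le_eq mult_left_mono) 
    also have "\<dots> = \<bar>t\<bar> * K" using t by (simp add: power2_eq_square field_simps)
    finally show ?thesis unfolding e .
  qed
  have "((\<lambda>t. (1/t) *\<^sub>R (mat_exp (t *\<^sub>R X) - mat 1) - X) \<longlongrightarrow> 0) (at 0)"
  proof (rule Lim_null_comparison)
    show "\<forall>\<^sub>F t in at 0. norm ((1/t) *\<^sub>R (mat_exp (t *\<^sub>R X) - mat 1) - X) \<le> \<bar>t\<bar> * K"
      unfolding eventually_at
      by (rule exI[of _ 1]) (auto intro!: bound simp: dist_real_def)
    show "((\<lambda>t. \<bar>t\<bar> * K) \<longlongrightarrow> 0) (at 0)"
      by (auto intro!: tendsto_eq_intros)
  qed
  then show ?thesis by (simp add: Lim_null[symmetric])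
qed


lemma mat_diff_ldistrib: "(A::real^'n^'m) ** (B - C) = A ** B - A ** C"
  by (simp add: matrix_matrix_mult_def vec_eq_iff sum_subtractf right_diff_distrib)
lemma mat_diff_rdistrib: "((B::real^'n^'m) - C) ** (A::real^'p^'n) = B ** A - C ** A"
  by (simp add: matrix_matrix_mult_def vec_eq_iff sum_subtractf left_diff_distrib)
lemma mat_add_rdistrib: "((B::real^'n^'m) + C) ** (A::real^'p^'n) = B ** A + C ** A"
  by (simp add: matrix_matrix_mult_def vec_eq_iff sum.distrib distrib_right)

lemma bl_lmult: "bounded_linear (\<lambda>M::real^'p^'n. (P::real^'n^'m) ** M)"
  by (intro linear_conv_bounded_linear[THEN iffD1] linearI) (simp_all add: matrix_add_ldistrib matrix_scalar_ac scalar_matrix_assoc[symmetric])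
lemma bl_rmult: "bounded_linear (\<lambda>M::real^'n^'m. M ** (P::real^'p^'n))"
  by (intro linear_conv_bounded_linear[THEN iffD1] linearI)
     (simp_all add: mat_add_rdistrib scalar_matrix_assoc[symmetric])

lemma comm_from_exp:
  fixes P Y :: "'n::finite mat"
  assumes "\<And>t. P ** mat_exp (t *\<^sub>R Y) = mat_exp (t *\<^sub>R Y) ** P"
  shows "P ** Y = Y ** P"
proof -
  define h where "h t = (1/t) *\<^sub>R (mat_exp (t *\<^sub>R Y) - mat 1)" for t
  have hY: "(h \<longlongrightarrow> Y) (at 0)" unfolding h_def by (rule mat_exp_deriv0)
  have eq: "P ** h t = h t ** P" for t
    unfolding h_def matrix_scalar_ac scalar_matrix_assoc[symmetric] mat_diff_ldistrib mat_diff_rdistrib assms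
    by (simp only: matrix_mul_lid matrix_mul_rid scaleR_diff_right)
  have "((\<lambda>t. P ** h t) \<longlongrightarrow> P ** Y) (at 0)"
    by (rule bounded_linear.tendsto[OF bl_lmult hY])
  moreover have "((\<lambda>t. P ** h t) \<longlongrightarrow> Y ** P) (at 0)"
    unfolding eq by (rule bounded_linear.tendsto[OF bl_rmult hY])
  ultimately show ?thesis by (rule tendsto_unique[rotated]) simp
qed

lemma lie_comm:
  fixes G :: "'n::finite mat set"
  assumes comm: "\<forall>A\<in>G. \<forall>A'\<in>G. A ** A' = A' ** A"
    and X: "X \<in> lie_alg G" and Y: "Y \<in> lie_alg G"
  shows "X ** Y = Y ** X"
proof -
  have eX: "mat_exp (t *\<^sub>R X) \<in> G" for t using X by (simp add: lie_alg_def)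
  have eY: "mat_exp (t *\<^sub>R Y) \<in> G" for t using Y by (simp add: lie_alg_def)
  have c: "mat_exp (s *\<^sub>R X) ** Y = Y ** mat_exp (s *\<^sub>R X)" for s
  proof (rule comm_from_exp)
    show "mat_exp (s *\<^sub>R X) ** mat_exp (t *\<^sub>R Y) = mat_exp (t *\<^sub>R Y) ** mat_exp (s *\<^sub>R X)" for t
      using comm eX eY by blast
  qed
  have "Y ** X = X ** Y"
    by (rule comm_from_exp) (rule c[symmetric])
  then show ?thesis by simp
qed



lemma sym_inner:
  fixes X :: "real^'n^'n"
  assumes "transpose X = X"
  shows "(X *v u) \<bullet> v = u \<bullet> (X *v v)"
proof -
  have "(X *v u) \<bullet> v = v \<bullet> (X *v u)" by (rule inner_commute)
  also have "\<dots> = (v v* X) \<bullet> u" by (rule dot_lmul_matrix[symmetric])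
  also have "v v* X = X *v v" using transpose_matrix_vector[of X v] assms by simp
  finally show ?thesis by (simp add: inner_commute)
qed

lemma quad_nonpos:
  fixes a b :: real
  assumes "a \<ge> 0" "\<And>t. 2 * t * a + t^2 * b \<le> 0"
  shows "a = 0"
proof (rule ccontr)
  assume "a \<noteq> 0"
  then have a: "a > 0" using assms(1) by simp
  define t where "t = a / (\<bar>b\<bar> + 1)"
  have t: "t > 0" "t * (\<bar>b\<bar> + 1) = a" using a by (auto simp: t_def field_simps)
  have "2 * t * a + t^2 * b \<le> 0" by (rule assms(2))
  moreover have "t * b \<ge> - t * \<bar>b\<bar>" using mult_left_mono[of "- \<bar>b\<bar>" b t] t(1) by simp
  ultimately have "t * (2 * a + t * b) \<le> 0" by (simp add: power2_eq_square algebra_simps)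
  then have "2 * a + t * b \<le> 0" using t(1) by (simp add: mult_le_0_iff)
  moreover have "t * \<bar>b\<bar> < a" using t by (simp add: algebra_simps)
  ultimately show False using \<open>t * b \<ge> - t * \<bar>b\<bar>\<close> a by linarith
qed

lemma eig_exists:
  fixes X :: "real^'n^'n"
  assumes sym: "transpose X = X" and W: "subspace W" and w0: "w0 \<in> W" "w0 \<noteq> 0"
    and inv: "\<And>w. w \<in> W \<Longrightarrow> X *v w \<in> W"
  shows "\<exists>v\<in>W. v \<noteq> 0 \<and> (\<exists>l. X *v v = l *\<^sub>R v)"
proof -
  define K where "K = W \<inter> sphere 0 1"
  define q where "q w = (X *v w) \<bullet> w" for w
  have "compact K" unfolding K_def
    by (intro closed_Int_compact closed_subspace W compact_sphere)
  moreover have "K \<noteq> {}"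
  proof -
    have "w0 /\<^sub>R norm w0 \<in> K" using w0 W by (simp add: K_def subspace_scale)
    then show ?thesis by blast
  qed
  moreover have "continuous_on K q" unfolding q_def
    by (intro continuous_intros linear_continuous_on linear_linear[THEN iffD1] matrix_vector_mul_linear)
  ultimately obtain v where v: "v \<in> K" and vmax: "\<And>y. y \<in> K \<Longrightarrow> q y \<le> q v"
    using continuous_attains_sup[of K q] by auto
  define l where "l = q v"
  have vW: "v \<in> W" and vn: "norm v = 1" using v by (auto simp: K_def)
  have qle: "q y \<le> l * (norm y)^2" if "y \<in> W" for y
  proof (cases "y = 0")
    case True then show ?thesis by (simp add: q_def)
  next
    case False
    have "y /\<^sub>R norm y \<in> K" using that False W by (simp add: K_def subspace_scale)
    then have "q (y /\<^sub>R norm y) \<le> l" using vmax l_def by blast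
    moreover have "q (y /\<^sub>R norm y) = q y / (norm y)^2"
      by (simp add: q_def matrix_vector_mult_scaleR power2_eq_square field_simps)
    ultimately show ?thesis using False by (simp add: divide_le_eq mult.commute)
  qed
  define w where "w = X *v v - l *\<^sub>R v"
  have wW: "w \<in> W" unfolding w_def by (intro subspace_diff W inv vW subspace_scale)
  have vv: "v \<bullet> v = 1" using vn by (simp add: norm_eq_1)
  have vw: "v \<bullet> w = 0" unfolding w_def l_def q_def
    using vv by (simp add: inner_diff_right inner_commute)
  have Xvw: "(X *v v) \<bullet> w = w \<bullet> w"
  proof -
    have "X *v v = w + l *\<^sub>R v" by (simp add: w_def)
    then show ?thesis using vw by (simp add: inner_add_left inner_add_right inner_commute[of w v])
  qed
  have "2 * t * (w \<bullet> w) + t^2 * (q w - l * (w \<bullet> w)) \<le> 0" for t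
  proof -
    have "v + t *\<^sub>R w \<in> W" by (intro subspace_add W vW subspace_scale wW)
    then have h: "q (v + t *\<^sub>R w) \<le> l * (norm (v + t *\<^sub>R w))^2" by (rule qle)
    have e1: "q (v + t *\<^sub>R w) = l + 2 * t * (w \<bullet> w) + t^2 * q w"
    proof -
      have "q (v + t *\<^sub>R w) = q v + t * ((X *v v) \<bullet> w) + t * ((X *v w) \<bullet> v) + t^2 * q w"
        unfolding q_def matrix_vector_right_distrib matrix_vector_mult_scaleR
        by (simp add: inner_add_left inner_add_right power2_eq_square distrib_left)
      moreover have "(X *v w) \<bullet> v = (X *v v) \<bullet> w"
        using sym_inner[OF sym, of w v] by (simp add: inner_commute)
      ultimately show ?thesis using Xvw l_def by simp
    qed
    have e2: "(norm (v + t *\<^sub>R w))^2 = 1 + t^2 * (w \<bullet> w)"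
      unfolding power2_norm_eq_inner
      by (simp add: inner_add_left inner_add_right vv vw inner_commute[of w v] power2_eq_square)
    show ?thesis using h unfolding e1 e2 by (simp add: algebra_simps)
  qed
  then have "w \<bullet> w = 0" by (intro quad_nonpos) simp_all
  then have "X *v v = l *\<^sub>R v" by (simp add: w_def)
  moreover have "v \<noteq> 0" using vn by auto
  ultimately show ?thesis using vW by blast
qed

lemma common_eig:
  fixes F :: "(real^'n^'n) set"
  assumes "finite F"
  shows "\<lbrakk>\<forall>X\<in>F. transpose X = X; \<forall>X\<in>F. \<forall>Y\<in>F. X ** Y = Y ** X; subspace W; w0 \<in> W; w0 \<noteq> 0;
     \<forall>X\<in>F. \<forall>w\<in>W. X *v w \<in> W\<rbrakk> \<Longrightarrow> \<exists>v\<in>W. v \<noteq> 0 \<and> (\<forall>X\<in>F. \<exists>l. X *v v = l *\<^sub>R v)"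
  using assms
proof (induction F arbitrary: W w0 rule: finite_induct)
  case empty
  then show ?case by blast
next
  case (insert X F)
  obtain u l where u: "u \<in> W" "u \<noteq> 0" "X *v u = l *\<^sub>R u"
  proof -
    have "\<exists>v\<in>W. v \<noteq> 0 \<and> (\<exists>l. X *v v = l *\<^sub>R v)"
      by (rule eig_exists[of X W w0]) (use insert.prems in simp_all)
    then show ?thesis using that by blast
  qed
  define W' where "W' = {w \<in> W. X *v w = l *\<^sub>R w}"
  have sW': "subspace W'"
    unfolding subspace_def
  proof (intro conjI ballI allI)
    show "0 \<in> W'" unfolding W'_def using subspace_0[OF insert.prems(3)] by simp
    show "x + y \<in> W'" if "x \<in> W'" "y \<in> W'" for x y
      using that subspace_add[OF insert.prems(3)] unfolding W'_def
      by (simp add: matrix_vector_right_distrib scaleR_add_right)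
    show "c *\<^sub>R x \<in> W'" if "x \<in> W'" for c x
      using that subspace_scale[OF insert.prems(3)] unfolding W'_def
      by (simp add: matrix_vector_mult_scaleR)
  qed
  have uW': "u \<in> W'" using u by (simp add: W'_def)
  have invW': "\<forall>Y\<in>F. \<forall>w\<in>W'. Y *v w \<in> W'"
  proof (intro ballI)
    fix Y w assume Y: "Y \<in> F" and w: "w \<in> W'"
    have "Y *v w \<in> W" using insert.prems(6) Y w unfolding W'_def by blast
    moreover have "X *v (Y *v w) = l *\<^sub>R (Y *v w)"
    proof -
      have "X *v (Y *v w) = (X ** Y) *v w" by (simp add: matrix_vector_mul_assoc)
      also have "X ** Y = Y ** X" using insert.prems(2) Y by blast
      also have "(Y ** X) *v w = Y *v (X *v w)" by (simp add: matrix_vector_mul_assoc)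
      also have "X *v w = l *\<^sub>R w" using w by (simp add: W'_def)
      finally show ?thesis by (simp add: matrix_vector_mult_scaleR)
    qed
    ultimately show "Y *v w \<in> W'" by (simp add: W'_def)
  qed
  obtain v where v: "v \<in> W'" "v \<noteq> 0" "\<forall>Y\<in>F. \<exists>m. Y *v v = m *\<^sub>R v"
  proof -
    have h1: "\<forall>X\<in>F. transpose X = X" using insert.prems(1) by blast
    have h2: "\<forall>X\<in>F. \<forall>Y\<in>F. X ** Y = Y ** X" using insert.prems(2) by blast
    have "\<exists>v\<in>W'. v \<noteq> 0 \<and> (\<forall>Y\<in>F. \<exists>m. Y *v v = m *\<^sub>R v)"
      by (rule insert.IH[OF h1 h2 sW' uW' u(2) invW'])
    then show ?thesis using that by blast
  qed
  have "v \<in> W" "X *v v = l *\<^sub>R v" using v(1) unfolding W'_def by blast+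
  then show ?case using v(2,3) by blast
qed

lemma onb_eig:
  fixes F :: "(real^'n^'n) set"
  assumes finF: "finite F" and sym: "\<forall>X\<in>F. transpose X = X"
    and comm: "\<forall>X\<in>F. \<forall>Y\<in>F. X ** Y = Y ** X"
  shows "\<exists>S. finite S \<and> (\<forall>s\<in>S. norm s = 1) \<and> pairwise orthogonal S
     \<and> (\<forall>s\<in>S. \<forall>X\<in>F. X *v s = (s \<bullet> (X *v s)) *\<^sub>R s) \<and> (\<forall>x. x = (\<Sum>s\<in>S. (x \<bullet> s) *\<^sub>R s))"
proof -
  define P where "P S \<longleftrightarrow> (\<forall>s\<in>S. norm s = 1) \<and> pairwise orthogonal S
      \<and> (\<forall>s\<in>S. \<forall>X\<in>F. \<exists>l. X *v s = l *\<^sub>R s)" for S :: "(real^'n) set"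
  have Pfin: "finite S \<and> card S \<le> CARD('n)" if "P S" for S
  proof -
    have "0 \<notin> S" using that unfolding P_def by force
    then have "independent S" using that unfolding P_def by (intro pairwise_orthogonal_independent) auto
    then show ?thesis using independent_bound[of S] by simp
  qed
  have "P {}" by (simp add: P_def)
  then obtain S where PS: "P S" and Smax: "\<And>S'. P S' \<Longrightarrow> card S' \<le> card S"
    using Lattices_Big.ex_has_greatest_nat[of P "{}" card "CARD('n) + 1"] Pfin
    by (metis less_Suc_eq_le Suc_eq_plus1)
  have finS: "finite S" using Pfin[OF PS] by blast
  have n1: "\<And>s. s \<in> S \<Longrightarrow> norm s = 1" and po: "pairwise orthogonal S"
    and eig: "\<And>s X. s \<in> S \<Longrightarrow> X \<in> F \<Longrightarrow> \<exists>l. X *v s = l *\<^sub>R s"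
    using PS unfolding P_def by blast+
  have dotS: "s \<bullet> s' = (if s' = s then 1 else 0)" if "s \<in> S" "s' \<in> S" for s s'
    using po n1 that by (auto simp: norm_eq_1 orthogonal_def pairwise_def)
  have expand: "x = (\<Sum>s\<in>S. (x \<bullet> s) *\<^sub>R s)" for x
  proof (rule ccontr)
    assume ne: "x \<noteq> (\<Sum>s\<in>S. (x \<bullet> s) *\<^sub>R s)"
    define r where "r = x - (\<Sum>s\<in>S. (x \<bullet> s) *\<^sub>R s)"
    have r0: "r \<noteq> 0" using ne by (simp add: r_def)
    have rS: "s \<bullet> r = 0" if "s \<in> S" for s
    proof -
      have "s \<bullet> (\<Sum>s'\<in>S. (x \<bullet> s') *\<^sub>R s') = (\<Sum>s'\<in>S. (x \<bullet> s') * (s \<bullet> s'))"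
        by (simp add: inner_sum_right)
      also have "\<dots> = (\<Sum>s'\<in>S. if s' = s then x \<bullet> s else 0)"
        by (intro sum.cong refl) (simp add: dotS that)
      also have "\<dots> = x \<bullet> s" using finS that by simp
      finally show ?thesis by (simp add: r_def inner_diff_right inner_commute)
    qed
    define W where "W = {w. \<forall>s\<in>S. s \<bullet> w = 0}"
    have sW: "subspace W" unfolding W_def subspace_def
      by (simp add: inner_add_right)
    have rW: "r \<in> W" using rS by (simp add: W_def)
    have invW: "\<forall>X\<in>F. \<forall>w\<in>W. X *v w \<in> W"
    proof (intro ballI)
      fix X w assume X: "X \<in> F" and w: "w \<in> W"
      show "X *v w \<in> W" unfolding W_def
      proof (intro CollectI ballI)
        fix s assume s: "s \<in> S"
        obtain l where l: "X *v s = l *\<^sub>R s" using eig[OF s X] by blast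
        have "s \<bullet> (X *v w) = (X *v s) \<bullet> w" using sym_inner[of X s w] sym X by simp
        also have "\<dots> = l * (s \<bullet> w)" by (simp add: l)
        also have "s \<bullet> w = 0" using w s by (simp add: W_def)
        finally show "s \<bullet> (X *v w) = 0" by simp
      qed
    qed
    obtain u where u: "u \<in> W" "u \<noteq> 0" "\<forall>X\<in>F. \<exists>l. X *v u = l *\<^sub>R u"
      using common_eig[OF finF sym comm sW rW r0 invW] by blast
    define u' where "u' = u /\<^sub>R norm u"
    have u'n: "norm u' = 1" using u(2) by (simp add: u'_def)
    have u'W: "u' \<in> W" using u(1) sW by (simp add: u'_def subspace_scale)
    have u'S: "u' \<notin> S"
    proof
      assume "u' \<in> S"
      then have "u' \<bullet> u' = 0" using u'W by (simp add: W_def)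
      then show False using u'n by simp
    qed
    have "P (insert u' S)"
      unfolding P_def
    proof (intro conjI ballI)
      show "norm s = 1" if "s \<in> insert u' S" for s using that n1 u'n by blast
      show "pairwise orthogonal (insert u' S)"
      proof -
        have "\<forall>y\<in>S. y \<noteq> u' \<longrightarrow> orthogonal u' y \<and> orthogonal y u'"
        proof (intro ballI impI)
          fix s assume "s \<in> S" "s \<noteq> u'"
          then have "s \<bullet> u' = 0" using u'W by (simp add: W_def)
          then show "orthogonal u' s \<and> orthogonal s u'" by (simp add: orthogonal_def inner_commute)
        qed
        then show ?thesis unfolding pairwise_insert using po by blast
      qed
      show "\<exists>l. X *v s = l *\<^sub>R s" if sX: "s \<in> insert u' S" "X \<in> F" for s X
      proof (cases "s = u'")
        case True
        obtain l where "X *v u = l *\<^sub>R u" using u(3) sX(2) by blast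
        then have "X *v u' = l *\<^sub>R u'" by (simp add: u'_def matrix_vector_mult_scaleR)
        then show ?thesis using True by blast
      next
        case False then show ?thesis using sX eig by blast
      qed
    qed
    then have "card (insert u' S) \<le> card S" by (rule Smax)
    then show False using finS u'S by simp
  qed
  have eig2: "X *v s = (s \<bullet> (X *v s)) *\<^sub>R s" if sx: "s \<in> S" "X \<in> F" for s X
  proof -
    obtain l where l: "X *v s = l *\<^sub>R s" using eig[OF sx] by blast
    have "s \<bullet> s = 1" using n1[OF sx(1)] by (simp add: norm_eq_1)
    then have "s \<bullet> (X *v s) = l" by (simp add: l)
    then show ?thesis using l by simp
  qed
  show ?thesis using finS n1 po eig2 expand by blast
qed



definition good :: "(real^'n \<Rightarrow> 'm::euclidean_space) \<Rightarrow> 'n set \<Rightarrow> bool" where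
  "good f K \<longleftrightarrow> (\<forall>w. (\<forall>i. i \<notin> K \<longrightarrow> w$i = 0) \<longrightarrow> f w = 0 \<longrightarrow> w = 0)"

lemma good_bound:
  fixes f :: "real^'n \<Rightarrow> 'm::euclidean_space"
  assumes lin: "linear f" and g: "good f K"
  shows "\<exists>c>0. \<forall>w. (\<forall>i. i \<notin> K \<longrightarrow> w$i = 0) \<longrightarrow> norm w \<le> c * norm (f w)"
proof -
  define h where "h w = (f w, \<chi> i. if i \<in> K then 0 else w$i)" for w :: "real^'n"
  have lh: "linear h" unfolding h_def
    by (intro linearI) (simp_all add: linear_add[OF lin] linear_scale[OF lin] vec_eq_iff)
  have ih: "inj h"
  proof (rule injI)
    fix x y assume "h x = h y"
    then have "h (x - y) = 0" using linear_diff[OF lh] by simp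
    then have "f (x - y) = 0" "(\<chi> i. if i \<in> K then 0 else (x - y)$i) = 0"
      by (simp_all add: h_def zero_prod_def)
    then have "f (x - y) = 0" "\<forall>i. i \<notin> K \<longrightarrow> (x - y)$i = 0"
    proof (simp_all add: vec_eq_iff, intro allI impI)
      fix i assume "\<forall>i. (if i \<in> K then 0 else (x - y) $ i) = 0" "i \<notin> K"
      then show "x $ i = y $ i" by (metis (full_types) right_minus_eq vector_minus_component)
    qed
    then have "x - y = 0" using g unfolding good_def by blast
    then show "x = y" by simp
  qed
  obtain B where B: "B > 0" "\<And>x. B * norm x \<le> norm (h x)"
    using linear_inj_bounded_below_pos[OF lh ih] by blast
  show ?thesis
  proof (intro exI[of _ "1/B"] conjI allI impI)
    show "1/B > 0" using B by simp
    fix w :: "real^'n" assume w: "\<forall>i. i \<notin> K \<longrightarrow> w$i = 0"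
    have "(\<chi> i. if i \<in> K then 0 else w$i) = 0" using w by (simp add: vec_eq_iff)
    then have "norm (h w) = norm (f w)" by (simp add: h_def norm_Pair)
    then have "B * norm w \<le> norm (f w)" using B(2)[of w] by simp
    then show "norm w \<le> 1/B * norm (f w)" using B(1) by (simp add: field_simps)
  qed
qed

lemma reduce:
  fixes f :: "real^'n \<Rightarrow> 'm::euclidean_space" and m :: "real^'n"
  assumes lin: "linear f" and m: "\<forall>i. m$i \<ge> 0"
  shows "(\<forall>i. z$i \<ge> 0) \<Longrightarrow> \<exists>z'. (\<forall>i. z'$i \<ge> 0) \<and> f z' = f z \<and> good f {i. z'$i \<noteq> 0} \<and> m \<bullet> z' \<le> m \<bullet> z"
proof (induction "card {i. z$i \<noteq> 0}" arbitrary: z rule: less_induct)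
  case less
  show ?case
  proof (cases "good f {i. z$i \<noteq> 0}")
    case True then show ?thesis using less.prems by blast
  next
    case False
    then obtain w where w0: "\<forall>i. z$i = 0 \<longrightarrow> w$i = 0" "f w = 0" "w \<noteq> 0"
      unfolding good_def by auto
    have A: "m \<bullet> w \<le> 0" if "\<forall>i. w$i \<le> 0"
      unfolding inner_vec_def inner_real_def using that m by (intro sum_nonpos) (simp add: mult_nonneg_nonpos)
    have B: "m \<bullet> w \<ge> 0" if "\<forall>i. w$i \<ge> 0"
      unfolding inner_vec_def inner_real_def using that m by (intro sum_nonneg) simp
    obtain j where j: "w$j \<noteq> 0" using w0(3) by (auto simp: vec_eq_iff)
    have "(m \<bullet> w \<ge> 0 \<and> (\<exists>i. w$i > 0)) \<or> (m \<bullet> (-w) \<ge> 0 \<and> (\<exists>i. (-w)$i > 0))"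
    proof (cases "m \<bullet> w \<ge> 0")
      case True
      show ?thesis
      proof (cases "\<exists>i. w$i > 0")
        case True then show ?thesis using \<open>m \<bullet> w \<ge> 0\<close> by blast
      next
        case False
        then have "\<forall>i. w$i \<le> 0" by (simp add: not_less)
        then have "m \<bullet> w = 0" "w$j < 0" using A \<open>m \<bullet> w \<ge> 0\<close> j by (auto simp: order.order_iff_strict)
        then show ?thesis by (intro disjI2) (auto simp: inner_minus_right)
      qed
    next
      case False
      have "\<exists>i. w$i < 0"
      proof (rule ccontr)
        assume "\<not> (\<exists>i. w$i < 0)"
        then have "\<forall>i. w$i \<ge> 0" by (simp add: not_less)
        then show False using B False by simp
      qed
      then show ?thesis using False by (intro disjI2) (auto simp: inner_minus_right)
    qed
    then obtain w' where w': "\<forall>i. z$i = 0 \<longrightarrow> w'$i = 0" "f w' = 0" "m \<bullet> w' \<ge> 0" "\<exists>i. w'$i > 0"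
    proof (elim disjE conjE)
      assume "m \<bullet> w \<ge> 0" "\<exists>i. w$i > 0"
      then show thesis using that[of w] w0 by blast
    next
      assume "m \<bullet> (-w) \<ge> 0" "\<exists>i. (-w)$i > 0"
      moreover have "f (-w) = 0" using w0(2) linear_neg[OF lin] by simp
      moreover have "\<forall>i. z$i = 0 \<longrightarrow> (-w)$i = 0" using w0(1) by simp
      ultimately show thesis using that[of "-w"] by blast
    qed
    define T where "T = {i. w'$i > 0}"
    have Tne: "T \<noteq> {}" and Tfin: "finite T" using w'(4) by (auto simp: T_def)
    define t where "t = Min ((\<lambda>i. z$i / w'$i) ` T)"
    have "t \<in> (\<lambda>i. z$i / w'$i) ` T" unfolding t_def using Tne Tfin by (intro Min_in) auto
    then obtain i0 where i0: "i0 \<in> T" "t = z$i0 / w'$i0" by blast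
    have tle: "t \<le> z$i / w'$i" if "i \<in> T" for i
      unfolding t_def using Tfin that by (intro Min_le) auto
    have t0: "t \<ge> 0" using i0 less.prems by (simp add: T_def)
    define z' where "z' = z - t *\<^sub>R w'"
    have z'nn: "\<forall>i. z'$i \<ge> 0"
    proof
      fix i
      show "z'$i \<ge> 0"
      proof (cases "w'$i > 0")
        case True
        then have "t \<le> z$i / w'$i" using tle by (simp add: T_def)
        then have "t * w'$i \<le> z$i" using True by (simp add: le_divide_eq)
        then show ?thesis by (simp add: z'_def)
      next
        case False
        then have "t * w'$i \<le> 0" using t0 by (simp add: mult_nonneg_nonpos)
        then show ?thesis using less.prems by (simp add: z'_def) (smt (verit))
      qed
    qed
    have fz': "f z' = f z" unfolding z'_def using linear_diff[OF lin] linear_scale[OF lin] w'(2) by simp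
    have mz': "m \<bullet> z' \<le> m \<bullet> z"
      unfolding z'_def using t0 w'(3) by (simp add: inner_diff_right)
    have sub: "{i. z'$i \<noteq> 0} \<subset> {i. z$i \<noteq> 0}"
    proof
      show "{i. z'$i \<noteq> 0} \<subseteq> {i. z$i \<noteq> 0}" using w'(1) by (auto simp: z'_def)
      have "w'$i0 > 0" using i0 by (simp add: T_def)
      then have "z$i0 \<noteq> 0" "z'$i0 = 0" using w'(1) i0(2) by (auto simp: z'_def)
      then show "{i. z'$i \<noteq> 0} \<noteq> {i. z$i \<noteq> 0}" by blast
    qed
    then have "card {i. z'$i \<noteq> 0} < card {i. z$i \<noteq> 0}" by (intro psubset_card_mono) auto
    then obtain z'' where "(\<forall>i. z''$i \<ge> 0)" "f z'' = f z'" "good f {i. z''$i \<noteq> 0}" "m \<bullet> z'' \<le> m \<bullet> z'"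
      using less.hyps z'nn by blast
    then show ?thesis using fz' mz' by (intro exI[of _ z'']) auto
  qed
qed

lemma lin_expand:
  fixes f :: "real^'n \<Rightarrow> 'm::euclidean_space"
  assumes lin: "linear f"
  shows "f z = (\<Sum>i\<in>UNIV. z$i *\<^sub>R f (axis i 1))"
proof -
  have "z = (\<Sum>i\<in>UNIV. z$i *\<^sub>R axis i 1)" using basis_expansion[of z] by (simp add: scalar_mult_eq_scaleR)
  then have "f z = f (\<Sum>i\<in>UNIV. z$i *\<^sub>R axis i 1)" by simp
  also have "\<dots> = (\<Sum>i\<in>UNIV. z$i *\<^sub>R f (axis i 1))" by (simp add: linear_sum[OF lin] linear_scale[OF lin])
  finally show ?thesis .
qed

lemma cs_weighted:
  fixes z mu :: "'n::finite \<Rightarrow> real"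
  assumes "\<forall>i. z i \<ge> 0"
  shows "(\<Sum>i\<in>UNIV. z i * mu i)^2 \<le> (\<Sum>i\<in>UNIV. z i * (mu i)^2) * (\<Sum>i\<in>UNIV. z i)"
proof -
  define u :: "real^'n" where "u = (\<chi> i. sqrt (z i) * mu i)"
  define v :: "real^'n" where "v = (\<chi> i. sqrt (z i))"
  have sq: "sqrt (z i) * sqrt (z i) = z i" for i using assms by simp
  have t1: "sqrt (z i) * mu i * sqrt (z i) = z i * mu i" for i
  proof -
    have "sqrt (z i) * mu i * sqrt (z i) = (sqrt (z i) * sqrt (z i)) * mu i" by (simp only: mult_ac)
    then show ?thesis by (simp only: sq)
  qed
  have t2: "sqrt (z i) * mu i * (sqrt (z i) * mu i) = z i * (mu i)^2" for i
  proof -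
    have "sqrt (z i) * mu i * (sqrt (z i) * mu i) = (sqrt (z i) * sqrt (z i)) * (mu i * mu i)" by (simp only: mult_ac)
    then show ?thesis by (simp only: sq power2_eq_square)
  qed
  have "u \<bullet> v = (\<Sum>i\<in>UNIV. z i * mu i)"
    unfolding u_def v_def inner_vec_def inner_real_def
    by (intro sum.cong refl) (simp only: vec_lambda_beta t1)
  moreover have "u \<bullet> u = (\<Sum>i\<in>UNIV. z i * (mu i)^2)"
    unfolding u_def inner_vec_def inner_real_def
    by (intro sum.cong refl) (simp only: vec_lambda_beta t2)
  moreover have "v \<bullet> v = (\<Sum>i\<in>UNIV. z i)"
    unfolding v_def inner_vec_def inner_real_def
    by (intro sum.cong refl) (simp only: vec_lambda_beta sq)
  ultimately show ?thesis using Cauchy_Schwarz_ineq[of u v] by simp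
qed

lemma lp_bound:
  fixes f :: "real^'n \<Rightarrow> 'm::euclidean_space"
  assumes lin: "linear f"
  shows "\<exists>C>0. \<forall>z. (\<forall>i. z$i \<ge> 0) \<longrightarrow> norm (f z) ^ 3 \<le> C * (\<Sum>i\<in>UNIV. (f z \<bullet> f (axis i 1))^2 * z$i)"
proof -
  have "\<forall>K. \<exists>c. c > 0 \<and> (good f K \<longrightarrow> (\<forall>w. (\<forall>i. i \<notin> K \<longrightarrow> w$i = 0) \<longrightarrow> norm w \<le> c * norm (f w)))"
  proof
    fix K
    show "\<exists>c. c > 0 \<and> (good f K \<longrightarrow> (\<forall>w. (\<forall>i. i \<notin> K \<longrightarrow> w$i = 0) \<longrightarrow> norm w \<le> c * norm (f w)))"
    proof (cases "good f K")
      case True then show ?thesis using good_bound[OF lin True] by blast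
    next
      case False then show ?thesis by (intro exI[of _ 1]) simp
    qed
  qed
  then obtain cK where cK: "\<And>K. cK K > 0"
    "\<And>K w. good f K \<Longrightarrow> (\<forall>i. i \<notin> K \<longrightarrow> w$i = 0) \<Longrightarrow> norm w \<le> cK K * norm (f w)"
    by metis
  define Cs where "Cs = (\<Sum>K\<in>(UNIV :: 'n set set). cK K)"
  have cKle: "cK K \<le> Cs" for K
    unfolding Cs_def by (rule member_le_sum) (auto intro: less_imp_le cK(1))
  have Cs0: "Cs > 0" using cKle[of "{}"] cK(1)[of "{}"] by simp
  define C where "C = real CARD('n) * Cs"
  have C0: "C > 0" using Cs0 by (simp add: C_def)
  show ?thesis
  proof (intro exI[of _ C] conjI allI impI C0)
    fix z :: "real^'n" assume z: "\<forall>i. z$i \<ge> 0"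
    define a where "a = f z"
    define mu where "mu i = a \<bullet> f (axis i 1)" for i
    define m :: "real^'n" where "m = (\<chi> i. (mu i)^2)"
    have m0: "\<forall>i. m$i \<ge> 0" by (simp add: m_def)
    obtain z' where z': "\<forall>i. z'$i \<ge> 0" "f z' = a" "good f {i. z'$i \<noteq> 0}" "m \<bullet> z' \<le> m \<bullet> z"
      using reduce[OF lin m0 z] unfolding a_def by blast
    have nz': "norm z' \<le> Cs * norm a"
    proof -
      have "norm z' \<le> cK {i. z'$i \<noteq> 0} * norm (f z')" by (rule cK(2)[OF z'(3)]) simp
      also have "\<dots> \<le> Cs * norm a" unfolding z'(2) by (intro mult_right_mono cKle) simp
      finally show ?thesis .
    qed
    have aa: "a \<bullet> a = (\<Sum>i\<in>UNIV. z'$i * mu i)"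
    proof -
      have "a \<bullet> a = a \<bullet> (\<Sum>i\<in>UNIV. z'$i *\<^sub>R f (axis i 1))" using lin_expand[OF lin, of z'] z'(2) by simp
      also have "\<dots> = (\<Sum>i\<in>UNIV. z'$i * mu i)" by (simp add: inner_sum_right mu_def)
      finally show ?thesis .
    qed
    have mz: "m \<bullet> z = (\<Sum>i\<in>UNIV. (f z \<bullet> f (axis i 1))^2 * z$i)"
      by (simp add: m_def mu_def a_def inner_vec_def)
    have mz': "m \<bullet> z' = (\<Sum>i\<in>UNIV. z'$i * (mu i)^2)"
      by (simp add: m_def inner_vec_def mult.commute)
    have sz': "(\<Sum>i\<in>UNIV. z'$i) \<le> real CARD('n) * norm z'"
    proof -
      have "(\<Sum>i\<in>UNIV. z'$i) \<le> (\<Sum>i\<in>(UNIV::'n set). norm z')"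
        by (intro sum_mono) (metis component_le_norm_cart abs_ge_self order_trans)
      then show ?thesis by simp
    qed
    have mzn: "m \<bullet> z \<ge> 0" unfolding inner_vec_def inner_real_def using m0 z by (intro sum_nonneg) simp
    have "(norm a)^4 = (a \<bullet> a)^2" by (simp add: power2_norm_eq_inner[symmetric] power_mult[symmetric])
    also have "\<dots> \<le> (\<Sum>i\<in>UNIV. z'$i * (mu i)^2) * (\<Sum>i\<in>UNIV. z'$i)"
      unfolding aa using cs_weighted[of "\<lambda>i. z'$i" mu] z'(1) by simp
    also have "\<dots> \<le> (m \<bullet> z) * (real CARD('n) * (Cs * norm a))"
    proof (intro mult_mono)
      show "(\<Sum>i\<in>UNIV. z'$i * (mu i)^2) \<le> m \<bullet> z" using z'(4) mz' by simp
      show "(\<Sum>i\<in>UNIV. z'$i) \<le> real CARD('n) * (Cs * norm a)"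
        using sz' nz' by (meson mult_left_mono of_nat_0_le_iff order_trans)
      show "0 \<le> m \<bullet> z" by (rule mzn)
      show "0 \<le> (\<Sum>i\<in>UNIV. z'$i)" using z'(1) by (intro sum_nonneg) simp
    qed
    finally have h: "(norm a)^4 \<le> (C * (m \<bullet> z)) * norm a" by (simp add: C_def algebra_simps)
    show "norm (f z) ^ 3 \<le> C * (\<Sum>i\<in>UNIV. (f z \<bullet> f (axis i 1))^2 * z$i)"
    proof (cases "norm a = 0")
      case True then show ?thesis using C0 mzn mz by (simp add: a_def)
    next
      case False
      then have "norm a > 0" by simp
      moreover have "(norm a)^3 * norm a \<le> (C * (m \<bullet> z)) * norm a"
      proof -
        have "(norm a)^3 * norm a = (norm a)^4" by (simp add: power_Suc2[symmetric] del: power_Suc)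
        then show ?thesis using h by simp
      qed
      ultimately have "(norm a)^3 \<le> C * (m \<bullet> z)" by simp
      then show ?thesis by (simp add: mz a_def)
    qed
  qed
qed



lemma on_inner:
  fixes v :: "'i \<Rightarrow> 'a::real_inner"
  assumes "finite I" "\<And>i j. i \<in> I \<Longrightarrow> j \<in> I \<Longrightarrow> v i \<bullet> v j = (if i = j then 1 else 0)"
  shows "(\<Sum>i\<in>I. c i *\<^sub>R v i) \<bullet> (\<Sum>j\<in>I. d j *\<^sub>R v j) = (\<Sum>i\<in>I. c i * d i)"
proof -
  have "(\<Sum>i\<in>I. c i *\<^sub>R v i) \<bullet> (\<Sum>j\<in>I. d j *\<^sub>R v j) = (\<Sum>j\<in>I. \<Sum>i\<in>I. d j * (c i * (v i \<bullet> v j)))"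
    by (simp only: inner_sum_left inner_sum_right inner_scaleR_left inner_scaleR_right sum_distrib_left mult.assoc)
  also have "\<dots> = (\<Sum>j\<in>I. \<Sum>i\<in>I. if i = j then c j * d j else 0)"
    by (intro sum.cong refl) (simp add: assms(2))
  also have "\<dots> = (\<Sum>i\<in>I. c i * d i)" using assms(1) by simp
  finally show ?thesis .
qed

lemma onb_index:
  fixes F :: "(real^'n^'n) set"
  assumes finF: "finite F" and sym: "\<forall>X\<in>F. transpose X = X"
    and comm: "\<forall>X\<in>F. \<forall>Y\<in>F. X ** Y = Y ** X"
  shows "\<exists>e :: 'n \<Rightarrow> real^'n. (\<forall>i j. e i \<bullet> e j = (if i = j then 1 else 0))
     \<and> (\<forall>i. \<forall>X\<in>F. X *v e i = (e i \<bullet> (X *v e i)) *\<^sub>R e i) \<and> (\<forall>x. x = (\<Sum>i\<in>UNIV. (x \<bullet> e i) *\<^sub>R e i))"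
proof -
  obtain S where S: "finite S" "\<forall>s\<in>S. norm s = 1" "pairwise orthogonal S"
     "\<forall>s\<in>S. \<forall>X\<in>F. X *v s = (s \<bullet> (X *v s)) *\<^sub>R s" "\<forall>x. x = (\<Sum>s\<in>S. (x \<bullet> s) *\<^sub>R s)"
    using onb_eig[OF finF sym comm] by blast
  have "0 \<notin> S" using S(2) by force
  then have "independent S" using S(3) by (intro pairwise_orthogonal_independent)
  then have c1: "card S \<le> CARD('n)" using independent_bound[of S] by simp
  have "UNIV \<subseteq> span S"
  proof
    fix x :: "real^'n"
    have "(\<Sum>s\<in>S. (x \<bullet> s) *\<^sub>R s) \<in> span S" by (intro span_sum span_scale span_base)
    then show "x \<in> span S" using S(5) by metis
  qed
  then have "dim (UNIV :: (real^'n) set) \<le> card S" using S(1) by (rule dim_le_card)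
  then have "card S = card (UNIV :: 'n set)" using c1 by simp
  then obtain h where h: "bij_betw h (UNIV :: 'n set) S"
    using finite_same_card_bij[of "UNIV :: 'n set" S] S(1) by auto
  have hS: "h i \<in> S" for i using h by (auto simp: bij_betw_def)
  have hinj: "h i = h j \<Longrightarrow> i = j" for i j using h by (auto simp: bij_betw_def inj_def)
  have dot: "h i \<bullet> h j = (if i = j then 1 else 0)" for i j
  proof (cases "i = j")
    case True then show ?thesis using S(2) hS[of i] by (simp add: norm_eq_1)
  next
    case False
    then have "h i \<noteq> h j" using hinj by blast
    then show ?thesis using S(3) hS[of i] hS[of j] False by (auto simp: pairwise_def orthogonal_def)
  qed
  have exp: "x = (\<Sum>i\<in>UNIV. (x \<bullet> h i) *\<^sub>R h i)" for x
  proof -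
    have "(\<Sum>i\<in>UNIV. (x \<bullet> h i) *\<^sub>R h i) = (\<Sum>s\<in>S. (x \<bullet> s) *\<^sub>R s)"
      by (rule sum.reindex_bij_betw[OF h])
    then show ?thesis using S(5) by metis
  qed
  show ?thesis using dot exp S(4) hS by (intro exI[of _ h]) blast
qed



lemma final_ineq:
  fixes n Q C0 :: real
  assumes n: "n \<ge> 0" and Q: "Q \<ge> 0" and C0: "C0 > 0" and h: "n^3 \<le> C0 * Q"
  shows "n^2 \<le> C0 powr (2/3) * (4 * sqrt Q) powr (4/3)"
proof (cases "n = 0")
  case True then show ?thesis by simp
next
  case False
  then have np: "n > 0" using n by simp
  have "n^2 = (n^3) powr (2/3)"
  proof -
    have "(n^3) powr (2/3) = (n powr 3) powr (2/3)" using powr_realpow[OF np, of 3] by simp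
    also have "\<dots> = n powr 2" by (simp add: powr_powr)
    also have "\<dots> = n^2" using powr_realpow[OF np, of 2] by simp
    finally show ?thesis by simp
  qed
  also have "\<dots> \<le> (C0 * Q) powr (2/3)" by (rule powr_mono2) (use h n in auto)
  also have "\<dots> = C0 powr (2/3) * Q powr (2/3)" using C0 Q by (simp add: powr_mult)
  also have "Q powr (2/3) = (sqrt Q) powr (4/3)"
    using Q by (simp add: powr_half_sqrt[symmetric] powr_powr)
  also have "(sqrt Q) powr (4/3) \<le> (4 * sqrt Q) powr (4/3)" by (rule powr_mono2) (use Q in auto)
  finally show ?thesis using C0 by (simp add: mult_left_mono)
qed

theorem mainTheorem19:
  fixes G :: "'n::finite mat set" and B :: "'n mat set"
  assumes "closed_subgroup_GL G"
    and "\<forall>A\<in>G. transpose A \<in> G"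
    and "\<forall>A\<in>G. \<forall>A'\<in>G. A ** A' = A' ** A"
    and "orthonormal_basis B (sym_part G)"
  shows "\<exists>C>0. \<forall>x :: real ^ 'n. C * norm (grad_phi B x) powr (4/3) \<ge> phi B x"
proof -
  have Bsub: "B \<subseteq> sym_part G" and Bpo: "pairwise orthogonal B" and Bn: "\<forall>X\<in>B. norm X = 1"
    using assms(4) unfolding orthonormal_basis_def by auto
  have "0 \<notin> B" using Bn by force
  then have "independent B" using Bpo pairwise_orthogonal_independent by blast
  then have finB: "finite B" using independent_bound by blast
  have symB: "\<forall>X\<in>B. transpose X = X" using Bsub by (auto simp: sym_part_def)
  have commB: "\<forall>X\<in>B. \<forall>Y\<in>B. X ** Y = Y ** X"
  proof (intro ballI)
    fix X Y assume "X \<in> B" "Y \<in> B"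
    then have "X \<in> lie_alg G" "Y \<in> lie_alg G" using Bsub by (auto simp: sym_part_def)
    then show "X ** Y = Y ** X" by (rule lie_comm[OF assms(3)])
  qed
  have Bdot: "X \<bullet> Y = (if X = Y then 1 else 0)" if "X \<in> B" "Y \<in> B" for X Y
  proof (cases "X = Y")
    case True then show ?thesis using Bn that by (simp add: norm_eq_1)
  next
    case False then show ?thesis using Bpo that by (auto simp: pairwise_def orthogonal_def)
  qed
  have Bdot': "id X \<bullet> id Y = (if X = Y then 1 else 0)" if "X \<in> B" "Y \<in> B" for X Y
    using Bdot[OF that] by simp
  obtain e :: "'n \<Rightarrow> real^'n" where e1: "\<forall>i j. e i \<bullet> e j = (if i = j then 1 else 0)"
    and e2: "\<forall>i. \<forall>X\<in>B. X *v e i = (e i \<bullet> (X *v e i)) *\<^sub>R e i"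
    and e3: "\<forall>x. x = (\<Sum>i\<in>UNIV. (x \<bullet> e i) *\<^sub>R e i)"
    using onb_index[OF finB symB commB] by blast
  define lam where "lam X i = e i \<bullet> (X *v e i)" for X i
  define f where "f z = (\<Sum>X\<in>B. (\<Sum>i\<in>UNIV. z$i * lam X i) *\<^sub>R X)" for z :: "real^'n"
  have linf: "linear f"
  proof (rule linearI)
    show "f (x + y) = f x + f y" for x y
      unfolding f_def by (simp add: distrib_right sum.distrib scaleR_add_left)
    show "f (c *\<^sub>R x) = c *\<^sub>R f x" for c x
      unfolding f_def by (simp add: scaleR_sum_right sum_distrib_left mult.assoc)
  qed
  obtain C0 where C0: "C0 > 0"
    "\<And>z. (\<forall>i. z$i \<ge> 0) \<Longrightarrow> norm (f z) ^ 3 \<le> C0 * (\<Sum>i\<in>UNIV. (f z \<bullet> f (axis i 1))^2 * z$i)"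
    using lp_bound[OF linf] by blast
  show ?thesis
  proof (intro exI[of _ "C0 powr (2/3)"] conjI allI)
    show "C0 powr (2/3) > 0" using C0 by simp
    fix x :: "real^'n"
    define xc where "xc i = x \<bullet> e i" for i
    define z :: "real^'n" where "z = (\<chi> i. (xc i)^2)"
    define a where "a X = (X *v x) \<bullet> x" for X
    define mu where "mu i = (\<Sum>X\<in>B. a X * lam X i)" for i
    have xe: "x = (\<Sum>i\<in>UNIV. xc i *\<^sub>R e i)" using e3 unfolding xc_def by blast
    have Xx: "X *v x = (\<Sum>i\<in>UNIV. (xc i * lam X i) *\<^sub>R e i)" if X: "X \<in> B" for X
    proof -
      have "X *v x = X *v (\<Sum>i\<in>UNIV. xc i *\<^sub>R e i)" using xe by metis
      also have "\<dots> = (\<Sum>i\<in>UNIV. xc i *\<^sub>R (X *v e i))"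
        by (simp add: linear_sum[OF matrix_vector_mul_linear] matrix_vector_mult_scaleR)
      also have "\<dots> = (\<Sum>i\<in>UNIV. (xc i * lam X i) *\<^sub>R e i)"
        by (intro sum.cong refl) (metis e2 X lam_def scaleR_scaleR)
      finally show ?thesis .
    qed
    have ed: "e i \<bullet> e j = (if i = j then 1 else 0)" if "i \<in> UNIV" "j \<in> UNIV" for i j using e1 by blast
    have aX: "a X = (\<Sum>i\<in>UNIV. z$i * lam X i)" if X: "X \<in> B" for X
    proof -
      have "a X = (\<Sum>i\<in>UNIV. (xc i * lam X i) *\<^sub>R e i) \<bullet> (\<Sum>i\<in>UNIV. xc i *\<^sub>R e i)"
        unfolding a_def using Xx[OF X] xe by metis
      also have "\<dots> = (\<Sum>i\<in>UNIV. xc i * lam X i * xc i)" by (rule on_inner[OF _ ed]) simp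
      also have "\<dots> = (\<Sum>i\<in>UNIV. z$i * lam X i)"
        by (intro sum.cong refl) (simp add: z_def power2_eq_square)
      finally show ?thesis .
    qed
    have fz: "f z = (\<Sum>X\<in>B. a X *\<^sub>R id X)"
      unfolding f_def by (intro sum.cong refl) (simp add: aX)
    have phi: "phi B x = (norm (f z))^2"
    proof -
      have "(norm (f z))^2 = f z \<bullet> f z" by (simp add: power2_norm_eq_inner)
      also have "\<dots> = (\<Sum>X\<in>B. a X * a X)" unfolding fz by (rule on_inner[OF finB Bdot'])
      also have "\<dots> = phi B x" by (simp add: phi_def a_def power2_eq_square)
      finally show ?thesis by simp
    qed
    have ax: "(\<Sum>j\<in>UNIV. (axis i 1 :: real^'n)$j * c j) = c i" for i c
    proof -
      have "(\<Sum>j\<in>UNIV. (axis i 1 :: real^'n)$j * c j) = (\<Sum>j\<in>UNIV. if j = i then c j else 0)"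
        by (intro sum.cong refl) (simp add: axis_def)
      then show ?thesis by simp
    qed
    have fax: "f (axis i 1) = (\<Sum>X\<in>B. lam X i *\<^sub>R id X)" for i
      unfolding f_def ax by simp
    have fmu: "f z \<bullet> f (axis i 1) = mu i" for i
      unfolding fz fax mu_def by (rule on_inner[OF finB Bdot'])
    have grad: "grad_phi B x = 4 *\<^sub>R (\<Sum>i\<in>UNIV. (xc i * mu i) *\<^sub>R e i)"
    proof -
      have "(\<Sum>X\<in>B. a X *\<^sub>R (X *v x)) = (\<Sum>X\<in>B. \<Sum>i\<in>UNIV. (a X * (xc i * lam X i)) *\<^sub>R e i)"
        by (intro sum.cong refl) (simp add: Xx scaleR_sum_right)
      also have "\<dots> = (\<Sum>i\<in>UNIV. \<Sum>X\<in>B. (a X * (xc i * lam X i)) *\<^sub>R e i)"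
        by (rule sum.swap)
      also have "\<dots> = (\<Sum>i\<in>UNIV. (xc i * mu i) *\<^sub>R e i)"
        by (intro sum.cong refl) (simp add: mu_def scaleR_sum_left[symmetric] sum_distrib_left mult_ac)
      finally show ?thesis by (simp add: grad_phi_def a_def)
    qed
    define Q where "Q = (\<Sum>i\<in>UNIV. (xc i * mu i) * (xc i * mu i))"
    have Q0: "Q \<ge> 0" unfolding Q_def by (intro sum_nonneg) simp
    have ng: "norm (grad_phi B x) = 4 * sqrt Q"
    proof -
      have "(norm (\<Sum>i\<in>UNIV. (xc i * mu i) *\<^sub>R e i))^2 = Q"
        unfolding power2_norm_eq_inner Q_def by (rule on_inner[OF _ ed]) simp
      then have "norm (\<Sum>i\<in>UNIV. (xc i * mu i) *\<^sub>R e i) = sqrt Q" by (metis norm_ge_zero real_sqrt_unique)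
      then show ?thesis unfolding grad by simp
    qed
    have "norm (f z) ^ 3 \<le> C0 * (\<Sum>i\<in>UNIV. (f z \<bullet> f (axis i 1))^2 * z$i)"
      by (rule C0(2)) (simp add: z_def)
    also have "(\<Sum>i\<in>UNIV. (f z \<bullet> f (axis i 1))^2 * z$i) = Q"
      unfolding Q_def fmu by (intro sum.cong refl) (simp add: z_def power2_eq_square mult_ac)
    finally have "norm (f z) ^ 3 \<le> C0 * Q" .
    then have "(norm (f z))^2 \<le> C0 powr (2/3) * (4 * sqrt Q) powr (4/3)"
      by (intro final_ineq Q0 C0(1)) simp_all
    then show "C0 powr (2/3) * norm (grad_phi B x) powr (4/3) \<ge> phi B x"
      unfolding phi ng .
  qed
qed

end
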